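(* Let $n\ge 2$ and let $\Delta(Q_{4n})$ be the commuting graph of the generalized quaternion group $Q_{4n}$. Then the Sombor spectrum of $\Delta(Q_{4n})$ consists of $-(4n-1)\sqrt2$ with multiplicity $1$, $-(2n-1)\sqrt2$ with multiplicity $2n-3$, $-3\sqrt2$ with multiplicity $n$, and the roots (with multiplicity) of \[\big(x-(4n-1)\sqrt2\big)\big(x-(2n-1)(2n-3)\sqrt2\big)(x-3\sqrt2)^n-8(n-1)(10n^2-6n+1)(x-3\sqrt2)^n-8n(8n^2-4n+5)\big(x-(2n-1)(2n-3)\sqrt2\big)(x-3\sqrt2)^{n-1}.\]
   Context: For a finite simple graph $\Gamma$ with vertices $u_1,\dots,u_N$, the Sombor matrix $S(\Gamma)$ has $(i,j)$ entry $\sqrt{\deg(u_i)^2+\deg(u_j)^2}$ if $u_i,u_j$ are adjacent and $0$ otherwise; the Sombor spectrum is the multiset of its eigenvalues. The generalized quaternion group is $Q_{4n}=\langle a,b: a^{2n}=e,\ a^n=b^2,\ ba=a^{-1}b\rangle$ of order $4n$. The commuting graph $\Delta(G)$ of a group $G$ has vertex set $G$, two distinct vertices $x,y$ being adjacent iff $xy=yx$. *)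

theory Defs
  imports "HOL-Algebra.Group" "Jordan_Normal_Form.Char_Poly"
    "HOL-Computational_Algebra.Fundamental_Theorem_Algebra"
begin

text \<open>The element a^i b^s (0 \<le> i < 2n, s \<in> {0,1}) is encoded by the natural
  number i + 2n*s, so the carrier is {0..<4n}. Multiplication follows from
  b a^k = a^{-k} b and b^2 = a^n:  a^i b^s * a^k b^t = a^{i + (-1)^s k + [s=t=1] n} b^{s+t}.\<close>

definition quat_exp :: "nat \<Rightarrow> nat \<Rightarrow> nat" where
  "quat_exp n x = x mod (2*n)"

definition quat_sgn :: "nat \<Rightarrow> nat \<Rightarrow> nat" where
  "quat_sgn n x = (if x < 2*n then 0 else 1)"

definition quat_mult :: "nat \<Rightarrow> nat \<Rightarrow> nat \<Rightarrow> nat" where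
  "quat_mult n x y =
     (let i = quat_exp n x; s = quat_sgn n x; k = quat_exp n y; t = quat_sgn n y;
          e = (if s = 0 then i + k else i + (2*n - k)) + (if s = 1 \<and> t = 1 then n else 0)
      in e mod (2*n) + 2*n*((s + t) mod 2))"

definition gen_quaternion_group :: "nat \<Rightarrow> nat monoid" where
  "gen_quaternion_group n = \<lparr>carrier = {0..<4*n}, mult = quat_mult n, one = 0\<rparr>"

definition commuting_adj :: "('a, 'b) monoid_scheme \<Rightarrow> 'a \<Rightarrow> 'a \<Rightarrow> bool" where
  "commuting_adj G x y \<longleftrightarrow>
     x \<in> carrier G \<and> y \<in> carrier G \<and> x \<noteq> y \<and> x \<otimes>\<^bsub>G\<^esub> y = y \<otimes>\<^bsub>G\<^esub> x"

definition graph_deg :: "nat \<Rightarrow> (nat \<Rightarrow> nat \<Rightarrow> bool) \<Rightarrow> nat \<Rightarrow> nat" where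
  "graph_deg N adj i = card {j. j < N \<and> adj i j}"

definition sombor_matrix :: "nat \<Rightarrow> (nat \<Rightarrow> nat \<Rightarrow> bool) \<Rightarrow> real mat" where
  "sombor_matrix N adj = mat N N (\<lambda>(i, j).
     if adj i j then sqrt ((real (graph_deg N adj i))^2 + (real (graph_deg N adj j))^2) else 0)"

definition sombor_spectrum :: "nat \<Rightarrow> (nat \<Rightarrow> nat \<Rightarrow> bool) \<Rightarrow> complex multiset" where
  "sombor_spectrum N adj = proots (char_poly (map_mat complex_of_real (sombor_matrix N adj)))"

end

theory Submission
  imports Defs
begin


definition adjc :: "nat \<Rightarrow> nat \<Rightarrow> nat \<Rightarrow> bool" where
  "adjc n x y \<longleftrightarrow> x < 4*n \<and> y < 4*n \<and> x \<noteq> y \<and>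
     (x = 0 \<or> x = n \<or> y = 0 \<or> y = n \<or> (x < 2*n \<and> y < 2*n) \<or>
      (2*n \<le> x \<and> 2*n \<le> y \<and> (x = y + n \<or> y = x + n)))"

lemma mod3: "0 < (m::nat) \<Longrightarrow> a < 3*m \<Longrightarrow> a mod m = (if a < m then a else if a < 2*m then a - m else a - 2*m)"
proof -
  assume m: "0 < m" and a: "a < 3*m"
  show ?thesis
  proof (cases "a < m")
    case True thus ?thesis by simp
  next
    case F: False
    show ?thesis
    proof (cases "a < 2*m")
      case True
      have "a mod m = (a - m) mod m" using F by (simp add: le_mod_geq)
      thus ?thesis using True F by simp
    next
      case False
      have "a mod m = (a - m) mod m" using F by (simp add: le_mod_geq)
      also have "\<dots> = (a - m - m) mod m" using False by (simp add: le_mod_geq)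
      finally show ?thesis using a False F by (simp add: mult_2)
    qed
  qed
qed

lemma quat_comm:
  assumes n: "n \<ge> 1" and x: "x < 4*n" and y: "y < 4*n"
  shows "quat_mult n x y = quat_mult n y x \<longleftrightarrow>
    (x = 0 \<or> x = n \<or> y = 0 \<or> y = n \<or> (x < 2*n \<and> y < 2*n) \<or>
      (2*n \<le> x \<and> 2*n \<le> y \<and> (x = y + n \<or> y = x + n \<or> x = y)))"
proof -
  have m: "0 < 2*n" using n by simp
  note M = mod3[OF m]
  show ?thesis
    unfolding quat_mult_def quat_exp_def quat_sgn_def Let_def
    using x y n
    apply (cases "x < 2*n"; cases "y < 2*n")
    apply (simp_all add: M)
    apply (auto split: if_splits)
    done
qed

lemma adj_eq: assumes n: "n \<ge> 1" shows "commuting_adj (gen_quaternion_group n) = adjc n"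
proof (intro ext)
  fix x y
  show "commuting_adj (gen_quaternion_group n) x y = adjc n x y"
    unfolding commuting_adj_def gen_quaternion_group_def adjc_def
    using quat_comm[OF n, of x y] by auto
qed

definition dgn :: "nat \<Rightarrow> nat \<Rightarrow> nat" where
  "dgn n i = (if i = 0 \<or> i = n then 4*n - 1 else if i < 2*n then 2*n - 1 else 3)"

definition wt :: "nat \<Rightarrow> nat \<Rightarrow> nat \<Rightarrow> real" where
  "wt n i j = sqrt ((real (dgn n i))^2 + (real (dgn n j))^2)"

definition sm :: "nat \<Rightarrow> nat \<Rightarrow> nat \<Rightarrow> real" where
  "sm n i j = (if adjc n i j then wt n i j else 0)"

context fixes n :: nat assumes n2: "2 \<le> n"
begin

lemma deg_eq: assumes i: "i < 4*n" shows "graph_deg (4*n) (adjc n) i = dgn n i"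
proof -
  consider "i = 0 \<or> i = n" | "i \<noteq> 0 \<and> i \<noteq> n \<and> i < 2*n" | "2*n \<le> i \<and> i < 3*n" | "3*n \<le> i" 
    using i by linarith
  thus ?thesis
  proof cases
    case 1
    hence "{j. j < 4*n \<and> adjc n i j} = {0..<4*n} - {i}" using i n2 unfolding adjc_def by auto
    thus ?thesis using 1 i unfolding graph_deg_def dgn_def by auto
  next
    case 2
    hence "{j. j < 4*n \<and> adjc n i j} = {0..<2*n} - {i}" using i n2 unfolding adjc_def by auto
    thus ?thesis using 2 i unfolding graph_deg_def dgn_def by auto
  next
    case 3
    hence "{j. j < 4*n \<and> adjc n i j} = {0, n, i+n}" using i n2 unfolding adjc_def by auto
    thus ?thesis using 3 i n2 unfolding graph_deg_def dgn_def by auto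
  next
    case 4
    hence "{j. j < 4*n \<and> adjc n i j} = {0, n, i-n}" using i n2 unfolding adjc_def by auto
    thus ?thesis using 4 i n2 unfolding graph_deg_def dgn_def by auto
  qed
qed

lemma S_eq: "sombor_matrix (4*n) (adjc n) = mat (4*n) (4*n) (\<lambda>(i,j). sm n i j)"
  unfolding sombor_matrix_def sm_def wt_def
  by (rule eq_matI) (auto simp: deg_eq)


lemma wt_simp: "i < 4*n \<Longrightarrow> j < 4*n \<Longrightarrow> wt n i j = wt n (if i = 0 \<or> i = n then 0 else if i < 2*n then 1 else 2*n) (if j = 0 \<or> j = n then 0 else if j < 2*n then 1 else 2*n)"
  unfolding wt_def dgn_def using n2 by auto

lemma sumZ: assumes i: "i < 4*n"
  shows "(\<Sum>l\<in>{0,n}. sm n i l) = (if i = 0 \<or> i = n then wt n 0 0 else if i < 2*n then 2*wt n 0 1 else 2*wt n 0 (2*n))"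
  using i n2 by (auto simp: sm_def adjc_def wt_def dgn_def)

lemma sumA: assumes i: "i < 4*n"
  shows "(\<Sum>l\<in>{1..<2*n}-{n}. sm n i l) = (if i = 0 \<or> i = n then real (2*n-2) * wt n 0 1 else if i < 2*n then real (2*n-3) * wt n 1 1 else 0)"
proof -
  have cA: "card ({1..<2*n}-{n}) = 2*n-2" using n2 by (simp add: card_Diff_singleton)
  consider "i = 0 \<or> i = n" | "i \<noteq> 0 \<and> i \<noteq> n \<and> i < 2*n" | "2*n \<le> i" using i by linarith
  thus ?thesis
  proof cases
    case 1
    have "(\<Sum>l\<in>{1..<2*n}-{n}. sm n i l) = (\<Sum>l\<in>{1..<2*n}-{n}. wt n 0 1)"
      by (rule sum.cong, insert 1 n2, auto simp: sm_def adjc_def wt_def dgn_def)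
    thus ?thesis using 1 cA by simp
  next
    case 2
    hence iA: "i \<in> {1..<2*n}-{n}" by auto
    have "(\<Sum>l\<in>{1..<2*n}-{n}. sm n i l) = sm n i i + (\<Sum>l\<in>{1..<2*n}-{n}-{i}. sm n i l)"
      by (rule sum.remove[OF _ iA], simp)
    also have "(\<Sum>l\<in>{1..<2*n}-{n}-{i}. sm n i l) = (\<Sum>l\<in>{1..<2*n}-{n}-{i}. wt n 1 1)"
      by (rule sum.cong, insert 2 n2, auto simp: sm_def adjc_def wt_def dgn_def)
    finally have e: "(\<Sum>l\<in>{1..<2*n}-{n}. sm n i l) = sm n i i + (\<Sum>l\<in>{1..<2*n}-{n}-{i}. wt n 1 1)" .
    have "card ({1..<2*n}-{n}-{i}) = 2*n-3" using cA iA by (simp add: card_Diff_singleton)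
    thus ?thesis using 2 e by (simp add: sm_def adjc_def)
  next
    case 3
    have "(\<Sum>l\<in>{1..<2*n}-{n}. sm n i l) = (\<Sum>l\<in>{1..<2*n}-{n}. 0)"
      by (rule sum.cong, insert 3 n2, auto simp: sm_def adjc_def)
    thus ?thesis using 3 n2 by simp
  qed
qed

lemma sumB: assumes i: "i < 4*n"
  shows "(\<Sum>l\<in>{2*n..<4*n}. sm n i l) = (if i = 0 \<or> i = n then real (2*n) * wt n 0 (2*n) else if i < 2*n then 0 else wt n (2*n) (2*n))"
proof -
  consider "i = 0 \<or> i = n" | "i \<noteq> 0 \<and> i \<noteq> n \<and> i < 2*n" | "2*n \<le> i" using i by linarith
  thus ?thesis
  proof cases
    case 1
    have "(\<Sum>l\<in>{2*n..<4*n}. sm n i l) = (\<Sum>l\<in>{2*n..<4*n}. wt n 0 (2*n))"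
      by (rule sum.cong, insert 1 n2, auto simp: sm_def adjc_def wt_def dgn_def)
    thus ?thesis using 1 by simp
  next
    case 2
    have "(\<Sum>l\<in>{2*n..<4*n}. sm n i l) = (\<Sum>l\<in>{2*n..<4*n}. 0)"
      by (rule sum.cong, insert 2 n2, auto simp: sm_def adjc_def)
    thus ?thesis using 2 by simp
  next
    case 3
    define pr where "pr = (if i < 3*n then i + n else i - n)"
    have pr: "pr \<in> {2*n..<4*n}" using 3 i n2 unfolding pr_def by auto
    have "(\<Sum>l\<in>{2*n..<4*n}. sm n i l) = (\<Sum>l\<in>{2*n..<4*n}. if l = pr then wt n (2*n) (2*n) else 0)"
      by (rule sum.cong, insert 3 i n2, auto simp: sm_def adjc_def wt_def dgn_def pr_def)
    thus ?thesis using 3 pr by simp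
  qed
qed

lemma sumB2: assumes i: "i < 4*n"
  shows "(\<Sum>l\<in>{3*n..<4*n}. sm n i l) = (if i = 0 \<or> i = n then real n * wt n 0 (2*n) else if i < 2*n then 0 else if i < 3*n then wt n (2*n) (2*n) else 0)"
proof -
  consider "i = 0 \<or> i = n" | "i \<noteq> 0 \<and> i \<noteq> n \<and> i < 2*n" | "2*n \<le> i \<and> i < 3*n" | "3*n \<le> i" using i by linarith
  thus ?thesis
  proof cases
    case 1
    have "(\<Sum>l\<in>{3*n..<4*n}. sm n i l) = (\<Sum>l\<in>{3*n..<4*n}. wt n 0 (2*n))"
      by (rule sum.cong, insert 1 n2, auto simp: sm_def adjc_def wt_def dgn_def)
    thus ?thesis using 1 by simp
  next
    case 2
    have "(\<Sum>l\<in>{3*n..<4*n}. sm n i l) = (\<Sum>l\<in>{3*n..<4*n}. 0)"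
      by (rule sum.cong, insert 2 n2, auto simp: sm_def adjc_def)
    thus ?thesis using 2 by simp
  next
    case 3
    have pr: "i + n \<in> {3*n..<4*n}" using 3 i n2 by auto
    have "(\<Sum>l\<in>{3*n..<4*n}. sm n i l) = (\<Sum>l\<in>{3*n..<4*n}. if l = i + n then wt n (2*n) (2*n) else 0)"
      by (rule sum.cong, insert 3 i n2, auto simp: sm_def adjc_def wt_def dgn_def)
    thus ?thesis using 3 pr by simp
  next
    case 4
    have "(\<Sum>l\<in>{3*n..<4*n}. sm n i l) = (\<Sum>l\<in>{3*n..<4*n}. 0)"
      by (rule sum.cong, insert 4 n2, auto simp: sm_def adjc_def)
    thus ?thesis using 4 n2 by simp
  qed
qed


end

definition qv :: "nat \<Rightarrow> nat \<Rightarrow> nat \<Rightarrow> real" where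
  "qv n v i = (if v = 0 then (if i = 0 \<or> i = n then 1 else 0)
    else if v = 1 then (if 1 \<le> i \<and> i < 2*n \<and> i \<noteq> n then 1 else 0)
    else if v = 2*n then (if 2*n \<le> i \<and> i < 4*n then 1 else 0)
    else if v = 3*n then (if 3*n \<le> i \<and> i < 4*n then 1 else 0)
    else if 2*n < v \<and> v < 3*n then (if i = v \<or> i = v + n then 1 else 0)
    else (if i = v then 1 else 0))"

definition tv :: "nat \<Rightarrow> nat \<Rightarrow> nat \<Rightarrow> real" where
  "tv n p v = (let a = wt n 0 0; zA = wt n 0 1; zB = wt n 0 (2*n); wA = wt n 1 1; c = wt n (2*n) (2*n) in
    if v = 0 then (if p = 0 then a else if p = 1 then 2*zA else if p = 2*n then 2*zB else 0)
    else if v = 1 then (if p = 0 then real (2*n-2)*zA else if p = 1 then real (2*n-3)*wA else 0)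
    else if v = 2*n then (if p = 0 then real (2*n)*zB else if p = 2*n then c else 0)
    else if v = 3*n then (if p = 0 then real n*zB else if p = 2*n then c else if p = 3*n then -c else 0)
    else if v = n then (if p = 0 then a else if p = n then -a else if p = 1 then zA else if p = 2*n then zB else 0)
    else if v < 2*n then (if p = 0 then zA else if p = 1 then wA else if p = v then -wA else 0)
    else if v < 3*n then (if p = 0 then 2*zB else if p = v then c else 0)
    else (if p = 0 then zB else if p = v - n then c else if p = v then -c else 0))"

context fixes n :: nat assumes n2: "2 \<le> n"
begin

lemma sum_ind: assumes "K \<subseteq> {0..<(N::nat)}"
  shows "(\<Sum>l\<in>{0..<N}. f l * (if l \<in> K then 1 else 0)) = (\<Sum>l\<in>K. (f l::real))"
proof -
  have "(\<Sum>l\<in>{0..<N}. f l * (if l \<in> K then 1 else 0)) = (\<Sum>l\<in>{0..<N}. if l \<in> K then f l else 0)"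
    by (rule sum.cong, auto)
  also have "\<dots> = (\<Sum>l\<in>{0..<N} \<inter> K. f l)" using sum.inter_restrict[of "{0..<N}" f K] by simp
  also have "{0..<N} \<inter> K = K" using assms by auto
  finally show ?thesis .
qed

lemma sum_supp: assumes "F \<subseteq> {0..<(N::nat)}" and "\<And>p. p < N \<Longrightarrow> p \<notin> F \<Longrightarrow> g p = 0"
  shows "(\<Sum>p\<in>{0..<N}. g p) = (\<Sum>p\<in>F. (g p::real))"
  by (rule sum.mono_neutral_right[of "{0..<N}" F], insert assms, auto)

lemma col0: assumes i: "i < 4*n"
  shows "(\<Sum>l\<in>{0..<4*n}. sm n i l * qv n 0 l) = (\<Sum>p\<in>{0..<4*n}. qv n p i * tv n p 0)"
proof -
  have "(\<Sum>l\<in>{0..<4*n}. sm n i l * qv n 0 l) = (\<Sum>l\<in>{0..<4*n}. sm n i l * (if l \<in> {0,n} then 1 else 0))"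
    by (rule sum.cong, auto simp: qv_def)
  also have "\<dots> = (\<Sum>l\<in>{0,n}. sm n i l)" by (rule sum_ind, insert n2, auto)
  also have "\<dots> = (if i = 0 \<or> i = n then wt n 0 0 else if i < 2*n then 2*wt n 0 1 else 2*wt n 0 (2*n))"
    by (rule sumZ[OF n2 i])
  also have "\<dots> = (\<Sum>p\<in>{0,1,2*n}. qv n p i * tv n p 0)"
    using i n2 by (auto simp: qv_def tv_def)
  also have "\<dots> = (\<Sum>p\<in>{0..<4*n}. qv n p i * tv n p 0)"
    by (rule sum_supp[symmetric], insert n2, auto simp: tv_def)
  finally show ?thesis .
qed


lemma col1: assumes i: "i < 4*n"
  shows "(\<Sum>l\<in>{0..<4*n}. sm n i l * qv n 1 l) = (\<Sum>p\<in>{0..<4*n}. qv n p i * tv n p 1)"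
proof -
  have "(\<Sum>l\<in>{0..<4*n}. sm n i l * qv n 1 l) = (\<Sum>l\<in>{0..<4*n}. sm n i l * (if l \<in> {1..<2*n}-{n} then 1 else 0))"
    using n2 by (intro sum.cong, auto simp: qv_def)
  also have "\<dots> = (\<Sum>l\<in>{1..<2*n}-{n}. sm n i l)" by (rule sum_ind, insert n2, auto)
  also have "\<dots> = (if i = 0 \<or> i = n then real (2*n-2) * wt n 0 1 else if i < 2*n then real (2*n-3) * wt n 1 1 else 0)"
    by (rule sumA[OF n2 i])
  also have "\<dots> = (\<Sum>p\<in>{0,1}. qv n p i * tv n p 1)"
    using i n2 by (auto simp: qv_def tv_def)
  also have "\<dots> = (\<Sum>p\<in>{0..<4*n}. qv n p i * tv n p 1)"
    by (rule sum_supp[symmetric], insert n2, auto simp: tv_def)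
  finally show ?thesis .
qed

lemma col2n: assumes i: "i < 4*n"
  shows "(\<Sum>l\<in>{0..<4*n}. sm n i l * qv n (2*n) l) = (\<Sum>p\<in>{0..<4*n}. qv n p i * tv n p (2*n))"
proof -
  have "(\<Sum>l\<in>{0..<4*n}. sm n i l * qv n (2*n) l) = (\<Sum>l\<in>{0..<4*n}. sm n i l * (if l \<in> {2*n..<4*n} then 1 else 0))"
    using n2 by (intro sum.cong, auto simp: qv_def)
  also have "\<dots> = (\<Sum>l\<in>{2*n..<4*n}. sm n i l)" by (rule sum_ind, insert n2, auto)
  also have "\<dots> = (if i = 0 \<or> i = n then real (2*n) * wt n 0 (2*n) else if i < 2*n then 0 else wt n (2*n) (2*n))"
    by (rule sumB[OF n2 i])
  also have "\<dots> = (\<Sum>p\<in>{0,2*n}. qv n p i * tv n p (2*n))"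
    using i n2 by (auto simp: qv_def tv_def)
  also have "\<dots> = (\<Sum>p\<in>{0..<4*n}. qv n p i * tv n p (2*n))"
    by (rule sum_supp[symmetric], insert n2, auto simp: tv_def)
  finally show ?thesis .
qed

lemma col3n: assumes i: "i < 4*n"
  shows "(\<Sum>l\<in>{0..<4*n}. sm n i l * qv n (3*n) l) = (\<Sum>p\<in>{0..<4*n}. qv n p i * tv n p (3*n))"
proof -
  have "(\<Sum>l\<in>{0..<4*n}. sm n i l * qv n (3*n) l) = (\<Sum>l\<in>{0..<4*n}. sm n i l * (if l \<in> {3*n..<4*n} then 1 else 0))"
    using n2 by (intro sum.cong, auto simp: qv_def)
  also have "\<dots> = (\<Sum>l\<in>{3*n..<4*n}. sm n i l)" by (rule sum_ind, insert n2, auto)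
  also have "\<dots> = (if i = 0 \<or> i = n then real n * wt n 0 (2*n) else if i < 2*n then 0 else if i < 3*n then wt n (2*n) (2*n) else 0)"
    by (rule sumB2[OF n2 i])
  also have "\<dots> = (\<Sum>p\<in>{0,2*n,3*n}. qv n p i * tv n p (3*n))"
    using i n2 by (auto simp: qv_def tv_def)
  also have "\<dots> = (\<Sum>p\<in>{0..<4*n}. qv n p i * tv n p (3*n))"
    by (rule sum_supp[symmetric], insert n2, auto simp: tv_def)
  finally show ?thesis .
qed

lemma colpt: assumes i: "i < 4*n" and v: "v < 4*n" "v \<noteq> 0" "v \<noteq> 1" "v \<noteq> 2*n" "v \<noteq> 3*n" "\<not> (2*n < v \<and> v < 3*n)"
  shows "(\<Sum>l\<in>{0..<4*n}. sm n i l * qv n v l) = (\<Sum>p\<in>{0..<4*n}. qv n p i * tv n p v)"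
proof -
  have "(\<Sum>l\<in>{0..<4*n}. sm n i l * qv n v l) = (\<Sum>l\<in>{0..<4*n}. sm n i l * (if l \<in> {v} then 1 else 0))"
    using n2 v by (intro sum.cong, auto simp: qv_def)
  also have "\<dots> = (\<Sum>l\<in>{v}. sm n i l)" by (rule sum_ind, insert v, auto)
  also have "\<dots> = sm n i v" by simp
  finally have L: "(\<Sum>l\<in>{0..<4*n}. sm n i l * qv n v l) = sm n i v" .
  consider "v = n" | "v < 2*n \<and> v \<noteq> n" | "3*n < v" using v by linarith
  thus ?thesis
  proof cases
    case 1
    have "sm n i v = (\<Sum>p\<in>{0,1,n,2*n}. qv n p i * tv n p v)"
      using i n2 1 by (auto simp: qv_def tv_def sm_def adjc_def wt_def dgn_def)
    also have "\<dots> = (\<Sum>p\<in>{0..<4*n}. qv n p i * tv n p v)"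
      by (rule sum_supp[symmetric], insert n2 v 1, auto simp: tv_def Let_def)
    finally show ?thesis using L by simp
  next
    case 2
    have "sm n i v = (\<Sum>p\<in>{0,1,v}. qv n p i * tv n p v)"
      using i n2 2 v by (auto simp: qv_def tv_def sm_def adjc_def wt_def dgn_def)
    also have "\<dots> = (\<Sum>p\<in>{0..<4*n}. qv n p i * tv n p v)"
      by (rule sum_supp[symmetric], insert n2 v 2, auto simp: tv_def Let_def)
    finally show ?thesis using L by simp
  next
    case 3
    have "sm n i v = (\<Sum>p\<in>{0,v-n,v}. qv n p i * tv n p v)"
      using i n2 3 v by (auto simp: qv_def tv_def sm_def adjc_def wt_def dgn_def)
    also have "\<dots> = (\<Sum>p\<in>{0..<4*n}. qv n p i * tv n p v)"
      by (rule sum_supp[symmetric], insert n2 v 3, auto simp: tv_def Let_def)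
    finally show ?thesis using L by simp
  qed
qed

lemma colpair: assumes i: "i < 4*n" and v: "2*n < v" "v < 3*n"
  shows "(\<Sum>l\<in>{0..<4*n}. sm n i l * qv n v l) = (\<Sum>p\<in>{0..<4*n}. qv n p i * tv n p v)"
proof -
  have "(\<Sum>l\<in>{0..<4*n}. sm n i l * qv n v l) = (\<Sum>l\<in>{0..<4*n}. sm n i l * (if l \<in> {v, v+n} then 1 else 0))"
    using n2 v by (intro sum.cong, auto simp: qv_def)
  also have "\<dots> = (\<Sum>l\<in>{v,v+n}. sm n i l)" by (rule sum_ind, insert v, auto)
  also have "\<dots> = sm n i v + sm n i (v+n)" using n2 by simp
  also have "\<dots> = (\<Sum>p\<in>{0,v}. qv n p i * tv n p v)"
      using i n2 v by (auto simp: qv_def tv_def sm_def adjc_def wt_def dgn_def)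
  also have "\<dots> = (\<Sum>p\<in>{0..<4*n}. qv n p i * tv n p v)"
      by (rule sum_supp[symmetric], insert n2 v, auto simp: tv_def Let_def)
  finally show ?thesis .
qed

end


lemma char_poly_conj:
  fixes A B L :: "'a :: field mat"
  assumes A: "A \<in> carrier_mat n n" and B: "B \<in> carrier_mat n n" and L: "L \<in> carrier_mat n n"
    and d: "det L \<noteq> 0" and e: "A * L = L * B"
  shows "char_poly A = char_poly B"
proof -
  from det_non_zero_imp_unit[OF L d, of undefined]
  obtain R where R: "R \<in> carrier_mat n n" "R * L = 1\<^sub>m n" "L * R = 1\<^sub>m n"
    unfolding Units_def by (auto simp: ring_mat_def)
  have "A = A * (L * R)" using A R by simp
  also have "\<dots> = (A * L) * R" using A L R by (simp add: assoc_mult_mat)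
  also have "\<dots> = L * B * R" using e by simp
  finally have "A = L * B * R" .
  hence "similar_mat A B" using A B L R by (intro similar_matI[of A B L R n]) auto
  thus ?thesis by (rule char_poly_similar)
qed

lemma char_poly_four_block_lower_zero:
  fixes A1 :: "'a :: idom mat"
  assumes A1: "A1 \<in> carrier_mat m m"
  and A2: "A2 \<in> carrier_mat m k" and A4: "A4 \<in> carrier_mat k k"
  shows "char_poly (four_block_mat A1 A2 (0\<^sub>m k m) A4) = char_poly A1 * char_poly A4" 
proof -
  let ?cm = "\<lambda> A. [:0, 1:] \<cdot>\<^sub>m 1\<^sub>m (dim_row A) +
         map_mat (\<lambda>a. [:- a:]) A"
  let ?B2 = "map_mat (\<lambda>a. [:- a:]) A2"
  have "char_poly (four_block_mat A1 A2 (0\<^sub>m k m) A4) = det (?cm (four_block_mat A1 A2 (0\<^sub>m k m) A4))"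
    unfolding char_poly_defs using A1 A4 by simp
  also have "?cm (four_block_mat A1 A2 (0\<^sub>m k m) A4) = four_block_mat (?cm A1) ?B2 (0\<^sub>m k m) (?cm A4)"
    by (rule eq_matI, insert A1 A2 A4, auto simp: one_poly_def)
  also have "det \<dots> = det (?cm A1) * det (?cm A4)"
    by (rule det_four_block_mat_lower_left_zero[OF _ _ refl], insert A1 A2 A4, auto)
  also have "\<dots> = char_poly A1 * char_poly A4" unfolding char_poly_defs ..
  finally show ?thesis .
qed

lemma det_permute_both:
  assumes A: "(A :: 'a :: comm_ring_1 mat) \<in> carrier_mat n n"
  and p: "p permutes {0 ..< n}"
  shows "det (mat n n (\<lambda> (i,j). A $$ (p i, p j))) = det A"
proof -
  let ?B = "mat n n (\<lambda> (i,j). A $$ (p i, j))"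
  have B: "?B \<in> carrier_mat n n" by simp
  have dB: "det ?B = signof p * det A" by (rule det_permute_rows[OF A p])
  have "mat n n (\<lambda> (i,j). A $$ (p i, p j)) = transpose_mat (mat n n (\<lambda> (i,j). (transpose_mat ?B) $$ (p i, j)))"
    by (rule eq_matI, insert p, auto simp: permutes_nat_less[OF p])
  hence "det (mat n n (\<lambda> (i,j). A $$ (p i, p j))) = det (mat n n (\<lambda> (i,j). (transpose_mat ?B) $$ (p i, j)))"
    using det_transpose[of "mat n n (\<lambda> (i,j). (transpose_mat ?B) $$ (p i, j))" n] by simp
  also have "\<dots> = signof p * det (transpose_mat ?B)"
    by (rule det_permute_rows[OF _ p], simp)
  also have "\<dots> = signof p * signof p * det A" using dB det_transpose[OF B] by simp
  also have "signof p * signof p = (1::'a)" using signof_pm_one[of p] by (auto simp: sign_def)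
  finally show ?thesis by simp
qed

lemma char_poly_permute:
  assumes A: "(A :: 'a :: comm_ring_1 mat) \<in> carrier_mat n n"
  and p: "p permutes {0 ..< n}"
  shows "char_poly (mat n n (\<lambda> (i,j). A $$ (p i, p j))) = char_poly A"
proof -
  have inj: "p i = p j \<longleftrightarrow> i = j" for i j using p by (metis permutes_inj injD)
  have "char_poly_matrix (mat n n (\<lambda> (i,j). A $$ (p i, p j))) =
    mat n n (\<lambda> (i,j). char_poly_matrix A $$ (p i, p j))"
    by (rule eq_matI, insert A p, auto simp: char_poly_matrix_def permutes_nat_less[OF p] inj)
  thus ?thesis unfolding char_poly_def using det_permute_both[OF _ p, of "char_poly_matrix A"] A by simp
qed



definition perm :: "nat \<Rightarrow> nat \<Rightarrow> nat" where
  "perm n k = (if k = 2 then 2*n else if 3 \<le> k \<and> k \<le> 2*n then k - 1 else k)"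

context fixes n :: nat assumes n2: "2 \<le> n"
begin

lemma perm_permutes: "perm n permutes {0..<4*n}"
proof (rule bij_imp_permutes)
  define pinv where "pinv v = (if v = 2*n then 2 else if 2 \<le> v \<and> v < 2*n then v + 1 else v)" for v
  show "bij_betw (perm n) {0..<4*n} {0..<4*n}"
    by (rule bij_betw_byWitness[of _ pinv], insert n2, auto simp: perm_def pinv_def)
  show "x \<notin> {0..<4*n} \<Longrightarrow> perm n x = x" for x using n2 by (auto simp: perm_def)
qed

definition "Lm = mat (4*n) (4*n) (\<lambda>(i,v). qv n v i)"
definition "Tm = mat (4*n) (4*n) (\<lambda>(p,v). tv n p v)"
definition "Sm = mat (4*n) (4*n) (\<lambda>(i,j). sm n i j)"

lemma SL: "Sm * Lm = Lm * Tm"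
proof (rule eq_matI)
  fix i v assume i: "i < dim_row (Lm * Tm)" and v: "v < dim_col (Lm * Tm)"
  hence i: "i < 4*n" and v: "v < 4*n" by (auto simp: Lm_def Tm_def)
  have "(Sm * Lm) $$ (i,v) = (\<Sum>l\<in>{0..<4*n}. sm n i l * qv n v l)"
    using i v by (simp add: Sm_def Lm_def scalar_prod_def)
  also have "\<dots> = (\<Sum>p\<in>{0..<4*n}. qv n p i * tv n p v)"
  proof -
    consider "v = 0" | "v = 1" | "v = 2*n" | "v = 3*n" | "2*n < v \<and> v < 3*n"
      | "v \<noteq> 0 \<and> v \<noteq> 1 \<and> v \<noteq> 2*n \<and> v \<noteq> 3*n \<and> \<not> (2*n < v \<and> v < 3*n)" by blast
    thus ?thesis
    proof cases
      case 1 thus ?thesis using col0[OF n2 i] by simp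
    next
      case 2 thus ?thesis using col1[OF n2 i] by simp
    next
      case 3 thus ?thesis using col2n[OF n2 i] by simp
    next
      case 4 thus ?thesis using col3n[OF n2 i] by simp
    next
      case 5 thus ?thesis using colpair[OF n2 i] by simp
    next
      case 6 thus ?thesis using colpt[OF n2 i v] by simp
    qed
  qed
  also have "\<dots> = (Lm * Tm) $$ (i,v)"
    using i v by (simp add: Tm_def Lm_def scalar_prod_def)
  finally show "(Sm * Lm) $$ (i,v) = (Lm * Tm) $$ (i,v)" .
qed (auto simp: Sm_def Lm_def Tm_def)

lemma detL: "det Lm = 1"
proof -
  have "det Lm = prod_list (diag_mat Lm)"
    by (rule det_lower_triangular[of "4*n"], insert n2, auto simp: Lm_def qv_def)
  also have "diag_mat Lm = map (\<lambda>_. 1) [0..<4*n]"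
    using n2 by (auto simp: diag_mat_def Lm_def qv_def intro!: map_cong)
  also have "prod_list \<dots> = 1" by (simp add: map_replicate_const)
  finally show ?thesis .
qed

lemma cpST: "char_poly Sm = char_poly Tm"
  by (rule char_poly_conj[OF _ _ _ _ SL, of "4*n"], insert detL, auto simp: Sm_def Lm_def Tm_def)


definition "Tp = mat (4*n) (4*n) (\<lambda>(k,l). tv n (perm n k) (perm n l))"
definition "T3 = mat 3 3 (\<lambda>(k,l). tv n (perm n k) (perm n l))"
definition "Xm = mat 3 (4*n-3) (\<lambda>(k,l). tv n (perm n k) (perm n (l+3)))"
definition "Um = mat (4*n-3) (4*n-3) (\<lambda>(k,l). tv n (perm n (k+3)) (perm n (l+3)))"

lemma perm_lt: "k < 4*n \<Longrightarrow> perm n k < 4*n" using n2 by (auto simp: perm_def)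

lemma cpTp: "char_poly Tp = char_poly Tm"
proof -
  have "Tp = mat (4*n) (4*n) (\<lambda>(k,l). Tm $$ (perm n k, perm n l))"
    by (rule eq_matI, auto simp: Tp_def Tm_def perm_lt)
  thus ?thesis using char_poly_permute[OF _ perm_permutes, of Tm] by (simp add: Tm_def)
qed

lemma tv_supp: "tv n p v \<noteq> 0 \<Longrightarrow> p = 0 \<or> p = 1 \<or> p = 2*n \<or> p = v \<or> (3*n < v \<and> p = v - n)"
  unfolding tv_def Let_def by (auto split: if_splits)

lemma tv_supp3: "v = 0 \<or> v = 1 \<or> v = 2*n \<Longrightarrow> tv n p v \<noteq> 0 \<Longrightarrow> p = 0 \<or> p = 1 \<or> p = 2*n"
  unfolding tv_def Let_def using n2 by (auto split: if_splits)

lemma perm_small: "perm n k = 0 \<or> perm n k = 1 \<or> perm n k = 2*n \<longleftrightarrow> k = 0 \<or> k = 1 \<or> k = 2"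
  using n2 unfolding perm_def by auto

lemma perm_inj: "perm n k = perm n l \<longleftrightarrow> k = l"
  using n2 unfolding perm_def by auto

lemma perm_big: "2*n < k \<Longrightarrow> perm n k = k" "2*n < perm n k \<Longrightarrow> perm n k = k"
  using n2 unfolding perm_def by auto

lemma Tp_block: "Tp = four_block_mat T3 Xm (0\<^sub>m (4*n-3) 3) Um"
proof (rule eq_matI)
  fix k l assume k: "k < dim_row (four_block_mat T3 Xm (0\<^sub>m (4*n-3) 3) Um)"
    and l: "l < dim_col (four_block_mat T3 Xm (0\<^sub>m (4*n-3) 3) Um)"
  hence k: "k < 4*n" and l: "l < 4*n" using n2 by (auto simp: T3_def Um_def)
  have z: "tv n (perm n k) (perm n l) = 0" if "\<not> k < 3" "l < 3"
  proof (rule ccontr)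
    assume "tv n (perm n k) (perm n l) \<noteq> 0"
    from tv_supp3[OF _ this] that perm_small[of l] perm_small[of k] show False by auto
  qed
  have "four_block_mat T3 Xm (0\<^sub>m (4*n-3) 3) Um $$ (k,l) = 
     (if k < 3 then if l < 3 then T3 $$ (k,l) else Xm $$ (k,l-3) else if l < 3 then 0 else Um $$ (k-3,l-3))"
    using k l n2 by (simp add: T3_def Um_def Xm_def)
  also have "\<dots> = tv n (perm n k) (perm n l)"
    using k l n2 z by (simp add: T3_def Um_def Xm_def)
  finally show "Tp $$ (k,l) = four_block_mat T3 Xm (0\<^sub>m (4*n-3) 3) Um $$ (k,l)"
    using k l by (simp add: Tp_def)
qed (insert n2, auto simp: Tp_def T3_def Um_def)

lemma U_ut: "upper_triangular Um"
proof (rule upper_triangularI)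
  fix k l assume lk: "l < k" and k: "k < dim_row Um"
  hence k: "k < 4*n-3" by (simp add: Um_def)
  have "tv n (perm n (k+3)) (perm n (l+3)) = 0"
  proof (rule ccontr)
    assume "tv n (perm n (k+3)) (perm n (l+3)) \<noteq> 0"
    from tv_supp[OF this] perm_small[of "k+3"] perm_inj[of "k+3" "l+3"] lk
    have "3*n < perm n (l+3) \<and> perm n (k+3) = perm n (l+3) - n" by auto
    with perm_big[of "l+3"] perm_big[of "k+3"] lk n2 show False by auto
  qed
  thus "Um $$ (k,l) = 0" using lk k by (simp add: Um_def)
qed

end



context fixes n :: nat assumes n2: "2 \<le> n"
begin

lemma cp_main: "char_poly (Sm n) = char_poly (T3 n) * char_poly (Um n)"
proof -
  have "char_poly (Sm n) = char_poly (Tp n)" using cpST[OF n2] cpTp[OF n2] by simp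
  also have "\<dots> = char_poly (four_block_mat (T3 n) (Xm n) (0\<^sub>m (4*n-3) 3) (Um n))"
    using Tp_block[OF n2] by simp
  also have "\<dots> = char_poly (T3 n) * char_poly (Um n)"
    by (rule char_poly_four_block_lower_zero, auto simp: T3_def[OF n2] Xm_def[OF n2] Um_def[OF n2])
  finally show ?thesis .
qed

lemma cpU: "char_poly (Um n) = [:wt n 0 0, 1:] * [:wt n 1 1, 1:]^(2*n-3) * [:- wt n (2*n) (2*n), 1:]^(n-1) * [:wt n (2*n) (2*n), 1:]^n"
proof -
  define g where "g v = [:- tv n v v, 1:]" for v
  have carr: "Um n \<in> carrier_mat (4*n-3) (4*n-3)" by (simp add: Um_def[OF n2])
  have "char_poly (Um n) = (\<Prod>a\<leftarrow>diag_mat (Um n). [:- a, 1:])"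
    by (rule char_poly_upper_triangular[OF carr U_ut[OF n2]])
  also have "diag_mat (Um n) = map (\<lambda>k. tv n (perm n (k+3)) (perm n (k+3))) [0..<4*n-3]"
    by (auto simp: diag_mat_def Um_def[OF n2] intro!: map_cong)
  also have "(\<Prod>a\<leftarrow>map (\<lambda>k. tv n (perm n (k+3)) (perm n (k+3))) [0..<4*n-3]. [:- a, 1:])
     = (\<Prod>k\<in>{0..<4*n-3}. g (perm n (k+3)))"
    using prod.distinct_set_conv_list[of "[0..<4*n-3]" "\<lambda>k. g (perm n (k+3))"] by (simp add: g_def comp_def)
  also have "\<dots> = (\<Prod>v\<in>(\<lambda>k. perm n (k+3)) ` {0..<4*n-3}. g v)"
    by (subst prod.reindex, auto simp: inj_on_def perm_inj[OF n2])
  also have "(\<lambda>k. perm n (k+3)) ` {0..<4*n-3} = {n} \<union> ({2..<2*n}-{n}) \<union> {2*n+1..<3*n} \<union> {3*n..<4*n}"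
  proof
    show "(\<lambda>k. perm n (k+3)) ` {0..<4*n-3} \<subseteq> {n} \<union> ({2..<2*n}-{n}) \<union> {2*n+1..<3*n} \<union> {3*n..<4*n}"
      using n2 by (auto simp: perm_def)
    show "{n} \<union> ({2..<2*n}-{n}) \<union> {2*n+1..<3*n} \<union> {3*n..<4*n} \<subseteq> (\<lambda>k. perm n (k+3)) ` {0..<4*n-3}"
    proof
      fix v assume v: "v \<in> {n} \<union> ({2..<2*n}-{n}) \<union> {2*n+1..<3*n} \<union> {3*n..<4*n}"
      show "v \<in> (\<lambda>k. perm n (k+3)) ` {0..<4*n-3}"
      proof (cases "v < 2*n")
        case True
        thus ?thesis using v n2 by (intro image_eqI[of _ _ "v - 2"], auto simp: perm_def)
      next
        case False
        thus ?thesis using v n2 by (intro image_eqI[of _ _ "v - 3"], auto simp: perm_def)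
      qed
    qed
  qed
  also have "(\<Prod>v\<in>{n} \<union> ({2..<2*n}-{n}) \<union> {2*n+1..<3*n} \<union> {3*n..<4*n}. g v)
     = g n * (\<Prod>v\<in>{2..<2*n}-{n}. g v) * (\<Prod>v\<in>{2*n+1..<3*n}. g v) * (\<Prod>v\<in>{3*n..<4*n}. g v)"
  proof -
    have a: "(\<Prod>v\<in>{n} \<union> ({2..<2*n}-{n}) \<union> {2*n+1..<3*n} \<union> {3*n..<4*n}. g v)
      = (\<Prod>v\<in>{n} \<union> ({2..<2*n}-{n}) \<union> {2*n+1..<3*n}. g v) * (\<Prod>v\<in>{3*n..<4*n}. g v)"
      by (rule prod.union_disjoint, auto)
    have b: "(\<Prod>v\<in>{n} \<union> ({2..<2*n}-{n}) \<union> {2*n+1..<3*n}. g v)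
      = (\<Prod>v\<in>{n} \<union> ({2..<2*n}-{n}). g v) * (\<Prod>v\<in>{2*n+1..<3*n}. g v)"
      by (rule prod.union_disjoint, auto)
    have c: "(\<Prod>v\<in>{n} \<union> ({2..<2*n}-{n}). g v) = g n * (\<Prod>v\<in>{2..<2*n}-{n}. g v)"
      by (rule trans[OF prod.union_disjoint], auto)
    show ?thesis using a b c by simp
  qed
  also have "g n = [:wt n 0 0, 1:]" using n2 by (simp add: g_def tv_def Let_def)
  also have "(\<Prod>v\<in>{2..<2*n}-{n}. g v) = (\<Prod>v\<in>{2..<2*n}-{n}. [:wt n 1 1, 1:])"
    using n2 by (intro prod.cong, auto simp: g_def tv_def Let_def)
  also have "\<dots> = [:wt n 1 1, 1:]^(2*n-3)" using n2 by (simp add: card_Diff_singleton)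
  also have "(\<Prod>v\<in>{2*n+1..<3*n}. g v) = (\<Prod>v\<in>{2*n+1..<3*n}. [:- wt n (2*n) (2*n), 1:])"
    using n2 by (intro prod.cong, auto simp: g_def tv_def Let_def)
  also have "\<dots> = [:- wt n (2*n) (2*n), 1:]^(n-1)" using n2 by simp
  also have "(\<Prod>v\<in>{3*n..<4*n}. g v) = (\<Prod>v\<in>{3*n..<4*n}. [:wt n (2*n) (2*n), 1:])"
    using n2 by (intro prod.cong, auto simp: g_def tv_def Let_def)
  also have "\<dots> = [:wt n (2*n) (2*n), 1:]^n" by simp
  finally show ?thesis .
qed

end



lemma det2: "det B = B$$(0,0)*B$$(1,1) - B$$(0,1)*B$$(1,0)" if B: "(B::'a::comm_ring_1 mat) \<in> carrier_mat 2 2" for B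
  proof -
    have "det B = (\<Sum>j<2. B $$ (0,j) * cofactor B 0 j)"
      by (rule laplace_expansion_row[OF B], simp)
    also have "\<dots> = B$$(0,0)*B$$(1,1) - B$$(0,1)*B$$(1,0)"
      using B by (simp add: numeral_2_eq_2 cofactor_def det_single mat_delete_def)
    finally show ?thesis .
  qed

lemma det3:
  assumes A: "(A :: 'a :: comm_ring_1 mat) \<in> carrier_mat 3 3"
  shows "det A = A$$(0,0)*A$$(1,1)*A$$(2,2) - A$$(0,0)*A$$(1,2)*A$$(2,1)
     - A$$(0,1)*A$$(1,0)*A$$(2,2) + A$$(0,1)*A$$(1,2)*A$$(2,0)
     + A$$(0,2)*A$$(1,0)*A$$(2,1) - A$$(0,2)*A$$(1,1)*A$$(2,0)"
proof -
  have "det A = (\<Sum>j<3. A $$ (0,j) * cofactor A 0 j)"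
    by (rule laplace_expansion_row[OF A], simp)
  also have "\<dots> = A $$ (0,0) * cofactor A 0 0 + A $$ (0,1) * cofactor A 0 1 + A $$ (0,2) * cofactor A 0 2"
    by (simp add: numeral_3_eq_3 numeral_2_eq_2)
  also have "\<dots> = A$$(0,0)*A$$(1,1)*A$$(2,2) - A$$(0,0)*A$$(1,2)*A$$(2,1)
     - A$$(0,1)*A$$(1,0)*A$$(2,2) + A$$(0,1)*A$$(1,2)*A$$(2,0)
     + A$$(0,2)*A$$(1,0)*A$$(2,1) - A$$(0,2)*A$$(1,1)*A$$(2,0)" 
    unfolding cofactor_def
    apply (subst (1 2 3) det2)
    using A apply (auto simp: mat_delete_def)
    apply (simp add: algebra_simps numeral_3_eq_3 numeral_2_eq_2)
    done
  finally show ?thesis .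
qed

context fixes n :: nat assumes n2: "2 \<le> n"
begin

lemma cpT3: "char_poly (T3 n) = [:- wt n 0 0, 1:] * [:- (real (2*n-3) * wt n 1 1), 1:] * [:- wt n (2*n) (2*n), 1:]
   - Polynomial.smult (real (2*n-2) * wt n 0 1 * (2 * wt n 0 1)) [:- wt n (2*n) (2*n), 1:]
   - Polynomial.smult (real (2*n) * wt n 0 (2*n) * (2 * wt n 0 (2*n))) [:- (real (2*n-3) * wt n 1 1), 1:]"
proof -
  have carr: "char_poly_matrix (T3 n) \<in> carrier_mat 3 3" by (simp add: T3_def[OF n2])
  have p: "perm n 0 = 0" "perm n 1 = 1" "perm n 2 = 2*n" using n2 by (auto simp: perm_def)
  have n0: "n \<noteq> 0" "2*n \<noteq> 0" "2*n \<noteq> 1" "2*n \<noteq> n" "(1::nat) \<noteq> n" "3*n \<noteq> 0" "3*n \<noteq> 1" "3*n \<noteq> 2*n" using n2 by auto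
  have p1: "perm n (Suc 0) = Suc 0" using n2 by (auto simp: perm_def)
  define M where "M = char_poly_matrix (T3 n)"
  define a where "a = wt n 0 0"
  define zA where "zA = wt n 0 1"
  define zB where "zB = wt n 0 (2*n)"
  define b where "b = real (2*n-3) * wt n 1 1"
  define c where "c = wt n (2*n) (2*n)"
  have e: "M $$ (0,0) = [:- a, 1:]" "M $$ (0,1) = [:- (real (2*n-2) * zA):]" "M $$ (0,2) = [:- (real (2*n) * zB):]"
     "M $$ (1,0) = [:- (2*zA):]" "M $$ (1,1) = [:- b, 1:]" "M $$ (1,2) = 0"
     "M $$ (2,0) = [:- (2*zB):]" "M $$ (2,1) = 0" "M $$ (2,2) = [:- c, 1:]"
    unfolding M_def a_def zA_def zB_def b_def c_def
    by (simp_all add: char_poly_matrix_def T3_def[OF n2] p p1 tv_def Let_def n0 one_pCons)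
  have "char_poly (T3 n) = det M" by (simp add: char_poly_def M_def)
  also have "\<dots> = [:- a, 1:] * [:- b, 1:] * [:- c, 1:]
   - Polynomial.smult (real (2*n-2) * zA * (2 * zA)) [:- c, 1:]
   - Polynomial.smult (real (2*n) * zB * (2 * zB)) [:- b, 1:]"
    unfolding det3[OF carr[folded M_def]] e
    apply (subst poly_eq_poly_eq_iff[symmetric])
    apply (rule ext)
    apply (simp add: algebra_simps)
    done
  finally show ?thesis unfolding a_def zA_def zB_def b_def c_def .
qed

end



lemma ring_id: "((a::'a::comm_ring)*b*c - k1*c - k2*b)*(l*w*cp*r) = l*w*r*(a*b*(c*cp) - k1*(c*cp) - k2*(b*cp))"
  by (simp add: algebra_simps)

lemma smult_conv: "Polynomial.smult a p = [:a:] * p" by simp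

lemma final_ms:
  fixes a b c :: complex and Q :: "complex poly"
  assumes nz: "[:-a,1:] * [:-b,1:]^k * [:-c,1:]^m * Q \<noteq> 0"
  shows "proots ([:-a,1:] * [:-b,1:]^k * [:-c,1:]^m * Q) = replicate_mset 1 a + replicate_mset k b + replicate_mset m c + proots Q"
proof -
  have lin: "proots ([:- x, 1:] ^ j) = replicate_mset j x" for x :: complex and j
    by (simp add: proots_power)
  have n1: "[:-a,1:] * [:-b,1:]^k * [:-c,1:]^m \<noteq> 0" and q: "Q \<noteq> 0" using nz by auto
  have n2: "[:-a,1:] * [:-b,1:]^k \<noteq> 0" and n3: "[:-c,1:]^m \<noteq> 0" using n1 by auto
  have n4: "[:-a,1:] \<noteq> 0" and n5: "[:-b,1:]^k \<noteq> 0" using n2 by auto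
  show ?thesis
    unfolding proots_mult[OF n1 q] proots_mult[OF n2 n3] proots_mult[OF n4 n5] lin
    using lin[of a 1] by simp
qed

lemma sqrt_twice: "0 \<le> (y::real) \<Longrightarrow> sqrt (y^2 + y^2) = y * sqrt 2"
proof -
  assume y: "0 \<le> y"
  have "sqrt (y^2 + y^2) = sqrt (y^2 * 2)" by (simp add: algebra_simps)
  also have "\<dots> = sqrt (y^2) * sqrt 2" by (rule real_sqrt_mult)
  also have "sqrt (y^2) = y" using y by simp
  finally show ?thesis .
qed

theorem corollary4p2:
  fixes n :: nat
  assumes "n \<ge> 2"
  defines "A \<equiv> [: - (real (4*n) - 1) * sqrt 2, 1 :]"
      and "B \<equiv> [: - ((2 * real n - 1) * (2 * real n - 3)) * sqrt 2, 1 :]"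
      and "C \<equiv> [: - 3 * sqrt 2, 1 :]"
  defines "P \<equiv> A * B * C ^ n
              - Polynomial.smult (8 * (real n - 1) * (10 * (real n)^2 - 6 * real n + 1)) (C ^ n)
              - Polynomial.smult (8 * real n * (8 * (real n)^2 - 4 * real n + 5)) (B * C ^ (n - 1))"
  shows "sombor_spectrum (4*n) (commuting_adj (gen_quaternion_group n)) =
           replicate_mset 1 (complex_of_real (- (real (4*n) - 1) * sqrt 2))
         + replicate_mset (2*n - 3) (complex_of_real (- (2 * real n - 1) * sqrt 2))
         + replicate_mset n (complex_of_real (- 3 * sqrt 2))
         + proots (map_poly complex_of_real P)"
proof -
  have n2: "2 \<le> n" using assms(1) by simp
  define r1 where "r1 = - (real (4*n) - 1) * sqrt 2"
  define r2 where "r2 = - (2 * real n - 1) * sqrt 2"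
  define r3 where "r3 = - 3 * sqrt 2"
  have ha: "wt n 0 0 = - r1"
  proof -
    have "wt n 0 0 = sqrt ((real (4*n) - 1)^2 + (real (4*n) - 1)^2)"
      using n2 by (simp add: wt_def dgn_def of_nat_diff)
    also have "\<dots> = (real (4*n) - 1) * sqrt 2" by (rule sqrt_twice, insert n2, simp)
    finally show ?thesis by (simp add: r1_def algebra_simps)
  qed
  have hw: "wt n 1 1 = - r2"
  proof -
    have "wt n 1 1 = sqrt ((2 * real n - 1)^2 + (2 * real n - 1)^2)"
      using n2 by (simp add: wt_def dgn_def of_nat_diff)
    also have "\<dots> = (2 * real n - 1) * sqrt 2" by (rule sqrt_twice, insert n2, simp)
    finally show ?thesis by (simp add: r2_def algebra_simps)
  qed
  have hc: "wt n (2*n) (2*n) = - r3"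
  proof -
    have "wt n (2*n) (2*n) = sqrt (3^2 + 3^2)"
      using n2 by (simp add: wt_def dgn_def)
    also have "\<dots> = 3 * sqrt 2" by (rule sqrt_twice, simp)
    finally show ?thesis by (simp add: r3_def algebra_simps)
  qed
  have hzA: "wt n 0 1 * wt n 0 1 = (4 * real n - 1)^2 + (2 * real n - 1)^2"
    using n2 by (simp add: wt_def dgn_def of_nat_diff)
  have hzB: "wt n 0 (2*n) * wt n 0 (2*n) = (4 * real n - 1)^2 + 9"
    using n2 by (simp add: wt_def dgn_def of_nat_diff)
  have k1: "real (2*n-2) * wt n 0 1 * (2 * wt n 0 1) = 8 * (real n - 1) * (10 * (real n)^2 - 6 * real n + 1)"
  proof -
    have "real (2*n-2) * wt n 0 1 * (2 * wt n 0 1) = 2 * real (2*n-2) * (wt n 0 1 * wt n 0 1)" by simp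
    also have "\<dots> = 2 * (2 * real n - 2) * ((4 * real n - 1)^2 + (2 * real n - 1)^2)"
      unfolding hzA using n2 by (simp add: of_nat_diff)
    finally show ?thesis by (simp add: algebra_simps power2_eq_square)
  qed
  have k2: "real (2*n) * wt n 0 (2*n) * (2 * wt n 0 (2*n)) = 8 * real n * (8 * (real n)^2 - 4 * real n + 5)"
  proof -
    have "real (2*n) * wt n 0 (2*n) * (2 * wt n 0 (2*n)) = 2 * real (2*n) * (wt n 0 (2*n) * wt n 0 (2*n))" by simp
    also have "\<dots> = 2 * (2 * real n) * ((4 * real n - 1)^2 + 9)"
      unfolding hzB by simp
    finally show ?thesis by (simp add: algebra_simps power2_eq_square)
  qed
  have hb: "real (2*n-3) * wt n 1 1 = ((2 * real n - 1) * (2 * real n - 3)) * sqrt 2"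
    unfolding hw r2_def using n2 by (simp add: of_nat_diff algebra_simps)
  have hA: "[:- wt n 0 0, 1:] = A" unfolding A_def ha r1_def by simp
  have hB: "[:- (real (2*n-3) * wt n 1 1), 1:] = B" unfolding B_def hb by simp
  have hC: "[:- wt n (2*n) (2*n), 1:] = C" unfolding C_def hc r3_def by simp
  have key: "char_poly (Sm n) = [:- r1, 1:] * [:- r2, 1:]^(2*n-3) * [:- r3, 1:]^n * P"
  proof -
    have "char_poly (Sm n) = char_poly (T3 n) * char_poly (Um n)" by (rule cp_main[OF n2])
    also have "\<dots> = (A * B * C - Polynomial.smult (8 * (real n - 1) * (10 * (real n)^2 - 6 * real n + 1)) C
       - Polynomial.smult (8 * real n * (8 * (real n)^2 - 4 * real n + 5)) B) * 
       ([:- r1, 1:] * [:- r2, 1:]^(2*n-3) * C^(n-1) * [:- r3, 1:]^n)"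
      unfolding cpT3[OF n2] cpU[OF n2] hA hB hC k1 k2 unfolding ha hw hc by simp
    also have "\<dots> = [:- r1, 1:] * [:- r2, 1:]^(2*n-3) * [:- r3, 1:]^n * 
       (A * B * (C * C^(n-1)) - Polynomial.smult (8 * (real n - 1) * (10 * (real n)^2 - 6 * real n + 1)) (C * C^(n-1))
       - Polynomial.smult (8 * real n * (8 * (real n)^2 - 4 * real n + 5)) (B * C^(n-1)))"
      unfolding smult_conv by (rule ring_id)
    also have "C * C^(n-1) = C^n" using n2 by (cases n) auto
    finally show ?thesis unfolding P_def .
  qed
  interpret R: map_poly_comm_ring_hom "complex_of_real" ..
  have mp: "map_poly complex_of_real [:- r, 1:] = [:- complex_of_real r, 1:]" for r by simp
  have n1: "1 \<le> n" using n2 by simp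
  have Sc: "Sm n \<in> carrier_mat (4*n) (4*n)" by (simp add: Sm_def[OF n2])
  have "sombor_spectrum (4*n) (commuting_adj (gen_quaternion_group n)) 
      = proots (char_poly (map_mat complex_of_real (Sm n)))"
    unfolding sombor_spectrum_def adj_eq[OF n1] using n2 S_eq[OF n2] Sm_def[OF n2] by simp
  also have "char_poly (map_mat complex_of_real (Sm n)) = map_poly complex_of_real (char_poly (Sm n))"
    by (rule of_real_hom.char_poly_hom[OF Sc])
  also have "\<dots> = [:- complex_of_real r1, 1:] * [:- complex_of_real r2, 1:]^(2*n-3) * [:- complex_of_real r3, 1:]^n
       * map_poly complex_of_real P"
    unfolding key by (simp only: R.hom_mult R.hom_power mp)
  finally have sp: "sombor_spectrum (4*n) (commuting_adj (gen_quaternion_group n)) = proots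
    ([:- complex_of_real r1, 1:] * [:- complex_of_real r2, 1:]^(2*n-3) * [:- complex_of_real r3, 1:]^n
       * map_poly complex_of_real P)" .
  have nz: "[:- complex_of_real r1, 1:] * [:- complex_of_real r2, 1:]^(2*n-3) * [:- complex_of_real r3, 1:]^n
       * map_poly complex_of_real P \<noteq> 0"
  proof -
    have "coeff (char_poly (map_mat complex_of_real (Sm n))) (4*n) = 1"
      using degree_monic_char_poly[of "map_mat complex_of_real (Sm n)" "4*n"] Sc by simp
    hence "char_poly (map_mat complex_of_real (Sm n)) \<noteq> 0" by auto
    also have "char_poly (map_mat complex_of_real (Sm n)) = [:- complex_of_real r1, 1:] * [:- complex_of_real r2, 1:]^(2*n-3) * [:- complex_of_real r3, 1:]^n
       * map_poly complex_of_real P"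
      unfolding of_real_hom.char_poly_hom[OF Sc] key by (simp only: R.hom_mult R.hom_power mp)
    finally show ?thesis .
  qed
  show ?thesis unfolding sp final_ms[OF nz] unfolding r1_def r2_def r3_def ..
qed


end
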